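(* Let $G$ be a compact group, $g\mapsto U_g$ an irreducible unitary representation of $G$ on a finite-dimensional Hilbert space $\mathcal{H}$, and $\mathcal{L}$ a $UU$-covariant Lindbladian on $\mathcal{H}$. Then the dynamical semigroup $\mathcal{A}_t=e^{t\mathcal{L}}$ is unital for every $t\ge0$, i.e. $\mathcal{A}_t(I)=I$, and $\mathcal{L}(I)=0$.
   Context: A Lindbladian has GKSL form and generates the CPTP semigroup $(e^{t\mathcal{L}})_{t\ge0}$. $\mathcal{L}$ is $UU$-covariant if $\mathcal{L}(U_gAU_g^\dagger)=U_g\mathcal{L}(A)U_g^\dagger$ for all operators $A$ on $\mathcal{H}$ and all $g\in G$. *)

theory Defs
  imports "HOL-Analysis.Analysis" "HOL-Algebra.Group"
begin

text \<open>Operators on the finite-dimensional Hilbert space H = C^'n are complex matrices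
  of type complex^'n^'n, with matrix product (**) and identity (mat 1).\<close>

definition adj :: "complex^'n^'n \<Rightarrow> complex^'n^'n" where
  "adj A = (\<chi> i j. cnj (A $ j $ i))"

definition unitary_mat :: "complex^'n^'n \<Rightarrow> bool" where
  "unitary_mat V \<longleftrightarrow> adj V ** V = mat 1 \<and> V ** adj V = mat 1"

definition complex_subspace :: "(complex^'n) set \<Rightarrow> bool" where
  "complex_subspace W \<longleftrightarrow> 0 \<in> W \<and> (\<forall>v\<in>W. \<forall>w\<in>W. v + w \<in> W)
     \<and> (\<forall>c::complex. \<forall>v\<in>W. c *s v \<in> W)"

definition compact_group :: "('g, 'b) monoid_scheme \<Rightarrow> 'g topology \<Rightarrow> bool" where
  "compact_group G T \<longleftrightarrow> group G \<and> topspace T = carrier G \<and> compact_space T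
     \<and> Hausdorff_space T
     \<and> continuous_map (prod_topology T T) T (\<lambda>(x, y). x \<otimes>\<^bsub>G\<^esub> y)
     \<and> continuous_map T T (\<lambda>x. inv\<^bsub>G\<^esub> x)"

definition unitary_rep ::
  "('g, 'b) monoid_scheme \<Rightarrow> 'g topology \<Rightarrow> ('g \<Rightarrow> complex^'n^'n) \<Rightarrow> bool" where
  "unitary_rep G T U \<longleftrightarrow>
     (\<forall>g\<in>carrier G. unitary_mat (U g))
     \<and> (\<forall>g\<in>carrier G. \<forall>h\<in>carrier G. U (g \<otimes>\<^bsub>G\<^esub> h) = U g ** U h)
     \<and> U \<one>\<^bsub>G\<^esub> = mat 1
     \<and> continuous_map T euclidean U"

definition irreducible_rep ::
  "('g, 'b) monoid_scheme \<Rightarrow> ('g \<Rightarrow> complex^'n^'n) \<Rightarrow> bool" where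
  "irreducible_rep G U \<longleftrightarrow>
     (\<forall>W. complex_subspace W \<and> (\<forall>g\<in>carrier G. \<forall>v\<in>W. U g *v v \<in> W)
        \<longrightarrow> W = {0} \<or> W = UNIV)"

text \<open>GKSL (Lindblad) form: L(A) = -i[H,A] + sum_k (L_k A L_k^* - 1/2 {L_k^* L_k, A})
  (scalars c written as mat c **) with H Hermitian and finitely many jump operators L_k.\<close>
definition lindbladian :: "(complex^'n^'n \<Rightarrow> complex^'n^'n) \<Rightarrow> bool" where
  "lindbladian L \<longleftrightarrow> (\<exists>H Ls. adj H = H \<and>
     (\<forall>A. L A = mat (- \<i>) ** (H ** A - A ** H)
        + (\<Sum>K\<leftarrow>Ls. K ** A ** adj K
             - mat (1/2 :: complex) ** (adj K ** K ** A + A ** (adj K ** K)))))"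

definition UU_covariant ::
  "('g, 'b) monoid_scheme \<Rightarrow> ('g \<Rightarrow> complex^'n^'n) \<Rightarrow> (complex^'n^'n \<Rightarrow> complex^'n^'n) \<Rightarrow> bool" where
  "UU_covariant G U L \<longleftrightarrow>
     (\<forall>g\<in>carrier G. \<forall>A. L (U g ** A ** adj (U g)) = U g ** L A ** adj (U g))"

definition dyn_semigroup ::
  "(complex^'n^'n \<Rightarrow> complex^'n^'n) \<Rightarrow> real \<Rightarrow> complex^'n^'n \<Rightarrow> complex^'n^'n" where
  "dyn_semigroup L t A = (\<Sum>k. (t ^ k / fact k) *\<^sub>R (L ^^ k) A)"

end

theory Submission imports Defs "Jordan_Normal_Form.Char_Poly" begin

lemma vec_eigen:
  fixes M :: "complex^'n::finite^'n"
  shows "\<exists>k (x::complex^'n). x \<noteq> 0 \<and> M *v x = k *s x"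
proof -
  define n where "n = CARD('n)"
  obtain f where f: "bij_betw f {0..<n} (UNIV::'n set)"
    using ex_bij_betw_nat_finite[of "UNIV::'n set"] unfolding n_def by auto
  define A where "A = Matrix.mat n n (\<lambda>(i,j). vec_nth (vec_nth M (f i)) (f j))"
  have A: "A \<in> carrier_mat n n" unfolding A_def by simp
  have n0: "n > 0" unfolding n_def by simp
  have "degree (char_poly A) = n" using degree_monic_char_poly[OF A] by simp
  then have "\<not> constant (poly (char_poly A))" using n0 constant_degree[of "char_poly A"] by simp
  then obtain k where "poly (char_poly A) k = 0" using fundamental_theorem_of_algebra by blast
  then have "eigenvalue A k" using eigenvalue_root_char_poly[OF A] by simp
  then obtain v where v: "eigenvector A v k" unfolding eigenvalue_def by blast
  have vc: "v \<in> carrier_vec n" and vnz: "v \<noteq> 0\<^sub>v n" and Av: "A *\<^sub>v v = k \<cdot>\<^sub>v v"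
    using v A unfolding eigenvector_def by auto
  define g where "g = inv_into {0..<n} f"
  have gf: "\<And>i. i < n \<Longrightarrow> g (f i) = i" unfolding g_def using f
    by (simp add: bij_betw_inv_into_left)
  have fg: "\<And>a. f (g a) = a" unfolding g_def using f
    by (simp add: bij_betw_inv_into_right)
  have gn: "\<And>a. g a < n" unfolding g_def using f
    by (metis atLeastLessThan_iff bij_betw_def inv_into_into UNIV_I)
  define x where "x = (\<chi> a. vec_index v (g a))"
  have xf: "\<And>i. i < n \<Longrightarrow> vec_nth x (f i) = vec_index v i" unfolding x_def using gf by simp
  have "x \<noteq> 0"
  proof
    assume "x = 0"
    then have "\<And>i. i < n \<Longrightarrow> vec_index v i = 0" using xf by (metis zero_index)
    then have "v = 0\<^sub>v n" using vc by (intro eq_vecI) auto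
    with vnz show False by simp
  qed
  moreover have "M *v x = k *s x"
  proof (rule Finite_Cartesian_Product.vec_eq_iff[THEN iffD2], rule allI)
    fix a
    let ?i = "g a"
    have "vec_index (A *\<^sub>v v) ?i = k * vec_index v ?i" using Av gn vc by simp
    moreover have "vec_index (A *\<^sub>v v) ?i = (\<Sum>j<n. vec_nth (vec_nth M a) (f j) * vec_index v j)"
      using A gn vc fg by (simp add: scalar_prod_def A_def lessThan_atLeast0 mult.commute)
    moreover have "(\<Sum>j<n. vec_nth (vec_nth M a) (f j) * vec_index v j) = (\<Sum>b\<in>UNIV. vec_nth (vec_nth M a) b * vec_nth x b)"
    proof -
      have "(\<Sum>b\<in>UNIV. vec_nth (vec_nth M a) b * vec_nth x b)
          = (\<Sum>j\<in>{0..<n}. vec_nth (vec_nth M a) (f j) * vec_nth x (f j))"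
        by (rule sum.reindex_bij_betw[symmetric, OF f])
      also have "\<dots> = (\<Sum>j\<in>{0..<n}. vec_nth (vec_nth M a) (f j) * vec_index v j)"
        by (rule sum.cong, simp_all add: xf)
      finally show ?thesis by (simp add: lessThan_atLeast0)
    qed
    ultimately show "vec_nth (M *v x) a = vec_nth (k *s x) a"
      by (simp add: matrix_vector_mult_def x_def)
  qed
  ultimately show ?thesis by blast
qed

hide_const (open) Matrix.mat

lemma mat_mult_vec_scalar: "(mat k :: complex^'n::finite^'n) *v y = k *s y"
  by (simp add: Finite_Cartesian_Product.vec_eq_iff matrix_vector_mult_def Finite_Cartesian_Product.mat_def if_distrib if_distribR cong: if_cong)

lemma schur_scalar:
  fixes U :: "'g \<Rightarrow> complex^'n::finite^'n" and M :: "complex^'n^'n"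
  assumes irr: "irreducible_rep G U"
    and comm: "\<forall>g\<in>carrier G. U g ** M = M ** U g"
  shows "\<exists>c. M = mat c"
proof -
  obtain k x where x: "x \<noteq> 0" "M *v x = k *s x" using vec_eigen by blast
  define W where "W = {y. M *v y = k *s y}"
  have sub: "complex_subspace W"
    unfolding complex_subspace_def W_def
    apply (auto simp: Finite_Cartesian_Product.vec_eq_iff matrix_vector_mult_def)
     apply (simp add: distrib_left sum.distrib)
    subgoal for c v i
      by (simp add: mult.left_commute[of _ c] mult.left_commute[of k c] flip: sum_distrib_left)
    done
  have inv: "\<forall>g\<in>carrier G. \<forall>v\<in>W. U g *v v \<in> W"
  proof (intro ballI)
    fix g v assume g: "g \<in> carrier G" and v: "v \<in> W"
    have "M *v (U g *v v) = (M ** U g) *v v" by (simp add: matrix_vector_mul_assoc)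
    also have "\<dots> = (U g ** M) *v v" using comm g by simp
    also have "\<dots> = U g *v (k *s v)" using v by (simp add: W_def matrix_vector_mul_assoc[symmetric])
    also have "\<dots> = k *s (U g *v v)"
      by (simp add: Finite_Cartesian_Product.vec_eq_iff matrix_vector_mult_def sum_distrib_left algebra_simps)
    finally show "U g *v v \<in> W" by (simp add: W_def)
  qed
  have "W = {0} \<or> W = UNIV" using irr sub inv unfolding irreducible_rep_def by blast
  moreover have "x \<in> W" using x by (simp add: W_def)
  ultimately have "W = UNIV" using x by auto
  then have "\<forall>y. M *v y = mat k *v y" by (auto simp: W_def mat_mult_vec_scalar)
  then show ?thesis using matrix_eq by blast
qed

lemma trace_sum_list:
  "trace (\<Sum>K\<leftarrow>Ls. f K :: complex^'n::finite^'n) = (\<Sum>K\<leftarrow>Ls. trace (f K))"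
  by (induction Ls) (simp_all add: trace_add trace_def sum.distrib)

lemma trace_mat_mult: "trace (mat c ** (Y::complex^'n::finite^'n)) = c * trace Y"
  by (simp add: trace_def matrix_matrix_mult_def Finite_Cartesian_Product.mat_def if_distrib if_distribR sum_distrib_left
      cong: if_cong)

theorem lemma6:
  fixes G :: "('g, 'b) monoid_scheme" and T :: "'g topology"
    and U :: "'g \<Rightarrow> complex^'n::finite^'n"
    and L :: "complex^'n^'n \<Rightarrow> complex^'n^'n"
  assumes "compact_group G T"
    and "unitary_rep G T U"
    and "irreducible_rep G U"
    and "lindbladian L"
    and "UU_covariant G U L"
  shows "(\<forall>t\<ge>0. dyn_semigroup L t (mat 1) = mat 1) \<and> L (mat 1) = 0"
proof -
  define X where "X = L (mat 1)"
  have comm: "\<forall>g\<in>carrier G. U g ** X = X ** U g"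
  proof
    fix g assume g: "g \<in> carrier G"
    have un: "adj (U g) ** U g = mat 1" "U g ** adj (U g) = mat 1"
      using assms(2) g unfolding unitary_rep_def unitary_mat_def by auto
    have "X = U g ** X ** adj (U g)"
      using assms(5) g un unfolding UU_covariant_def X_def by (metis matrix_mul_rid)
    then have "X ** U g = U g ** X ** (adj (U g) ** U g)" by (metis matrix_mul_assoc)
    then show "U g ** X = X ** U g" using un by simp
  qed
  obtain c where c: "X = mat c" using schur_scalar[OF assms(3) comm] by blast
  obtain H Ls where HL: "adj H = H" and Lf: "\<And>A. L A = mat (- \<i>) ** (H ** A - A ** H)
        + (\<Sum>K\<leftarrow>Ls. K ** A ** adj K
             - mat (1/2 :: complex) ** (adj K ** K ** A + A ** (adj K ** K)))"
    using assms(4) unfolding lindbladian_def by blast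
  have "trace X = 0"
    unfolding X_def Lf trace_add trace_sub trace_sum_list trace_mat_mult
    by (simp add: trace_mul_sym[of _ "adj _"])
  then have "c = 0" using c by (simp add: trace_def Finite_Cartesian_Product.mat_def)
  then have X0: "L (mat 1) = 0" using c X_def by simp
  have L0: "L 0 = 0" using Lf[of 0] by simp
  have pw: "(L ^^ Suc k) (mat 1) = 0" for k
    by (induction k) (simp_all add: X0 L0)
  have "dyn_semigroup L t (mat 1) = mat 1" for t
  proof -
    have "(\<lambda>k. (t ^ k / fact k) *\<^sub>R (L ^^ k) (mat 1)) = (\<lambda>k. if k = 0 then mat 1 else 0)"
      by (rule ext) (metis funpow_0 not0_implies_Suc pw power_0 fact_0 div_by_1 scaleR_one scaleR_zero_right)
    then show ?thesis unfolding dyn_semigroup_def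
      using sums_single[of 0 "\<lambda>_. mat 1 :: complex^'n^'n"] sums_unique by (metis (no_types))
  qed
  then show ?thesis using X0 by simp
qed
end
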